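(* Assume the Setting below with $q<n\le2p$. Fix an integer $N\in[2p,4p]$. Then for every $\xi_*\in(0,E_0)$ such that $\Lambda_n(\xi_* )\neq0$ and $\Lambda_n'(\xi_* )<0$ there exists a solution $v_*(t)$ of $du/dt=\sum_{k=n}^Nt^{-k/q}\Lambda_k(u)$, defined for all large $t$, with $v_*(t)=\xi_*+O(t^{-1/q})$ as $t\to\infty$.
   Context: Setting: for the Itô system $d{\bf z}={\bf a}({\bf z},t)dt+{\bf A}({\bf z},t)d{\bf w}$ in $\mathbb R^2$ (${\bf w}$ a 2D Wiener process) with deterministic smooth coefficients, ${\bf a}(0,t)\equiv0$, asymptotic expansions ${\bf a}\sim{\bf a}_0+\sum_{k\ge1}t^{-k/q}{\bf a}_k$, ${\bf A}\sim\sum_{k\ge1}t^{-k/q}{\bf A}_k$ ($q\in\mathbb Z_+$) uniformly near the origin, ${\bf a}_0=(\partial_yH_0,-\partial_xH_0)^T$ with $H_0=|{\bf z}|^2/2+O(|{\bf z}|^3)$ whose level sets $\{H_0=E\}$, $E\in(0,E_0]$, near the origin are closed curves carrying periodic solutions $(x_*,y_* )(t,E)$ (normalized $x_*(0,E)>0$, $y_*(0,E)=0$) of frequency $\nu(E)=1+O(E)$, $\nu\neq0$; $p\in\mathbb Z_+$ minimal with ${\bf A}_p(0)\neq0$. With energy–angle variables $x=X(\varphi,E)=x_*(\varphi/\nu(E),E)$, $y=Y(\varphi,E)=y_*(\varphi/\nu(E),E)$, inverse $E=I(x,y)$, $\varphi=\Phi(x,y)$, and generator $LU=\partial_tU+(\nabla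 U)^T{\bf a}+\frac12\mathrm{tr}({\bf A}^T{\bf H}(U){\bf A})$, the averaged coefficients $\Lambda_k(E)$ and $v_k(E,\varphi)$ ($2\pi$-periodic, zero $\varphi$-mean), $k\ge1$, are uniquely determined order by order by $L[V_N(I,\Phi,t)]=\sum_{k=1}^Nt^{-k/q}\Lambda_k(V_N)+O(t^{-(N+1)/q})$ for every $N$, where $V_N=E+\sum_{k=1}^Nt^{-k/q}v_k(E,\varphi)$. $n\le2p$ is the smallest index with $\Lambda_k\equiv0$ for $k<n$, $\Lambda_n\not\equiv0$. *)

theory Defs
  imports "HOL-Analysis.Analysis" "HOL-Library.Landau_Symbols"
begin

definition smooth_on :: "real set \<Rightarrow> (real \<Rightarrow> real) \<Rightarrow> bool" where
  "smooth_on S f \<longleftrightarrow> (\<forall>m. ((deriv ^^ m) f) differentiable_on S)"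

end

theory Submission
  imports Defs
begin

lemma picard:
  fixes G :: "real \<Rightarrow> real \<Rightarrow> real" and h M L \<xi> :: real
  assumes contG: "continuous_on UNIV (\<lambda>p. G (fst p) (snd p))"
    and bnd: "\<And>s u. \<bar>G s u\<bar> \<le> M"
    and lip: "\<And>s u u'. \<bar>G s u - G s u'\<bar> \<le> L * \<bar>u - u'\<bar>"
    and h: "h > 0" "h * L \<le> 1/2" and L: "L \<ge> 0"
  shows "\<exists>\<phi>::real\<Rightarrow>real. continuous_on UNIV \<phi> \<and>
           (\<forall>\<tau>\<in>{0..h}. \<phi> \<tau> = \<xi> + integral {0..\<tau>} (\<lambda>s. G s (\<phi> s)))"
proof -
  define cl where "cl \<tau> = max 0 (min h \<tau>)" for \<tau> :: real
  have cl: "cl \<tau> \<in> {0..h}" for \<tau> using h by (auto simp: cl_def)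
  have contF: "continuous_on UNIV (\<lambda>s. G s (f s))" if "continuous_on UNIV f" for f :: "real \<Rightarrow> real"
  proof -
    have "continuous_on UNIV (\<lambda>s. (s, f s))" using that by (intro continuous_intros) auto
    from continuous_on_compose2[OF contG this] show ?thesis by simp
  qed
  have M0: "M \<ge> 0" using bnd[of 0 0] by simp
  define T where "T f = (\<lambda>\<tau>. \<xi> + integral {0..cl \<tau>} (\<lambda>s. G s (apply_bcontfun f s)))" for f :: "real \<Rightarrow>\<^sub>C real"
  have Tin: "T f \<in> bcontfun" for f
  proof -
    have cF: "continuous_on UNIV (\<lambda>s. G s (apply_bcontfun f s))" by (rule contF) simp
    have c1: "continuous_on {0..h} (\<lambda>x. integral {0..x} (\<lambda>s. G s (apply_bcontfun f s)))"
      by (rule indefinite_integral_continuous_1, rule integrable_continuous_real,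
          rule continuous_on_subset[OF cF]) auto
    have c2: "continuous_on UNIV cl" unfolding cl_def by (intro continuous_intros)
    have "continuous_on UNIV (\<lambda>\<tau>. integral {0..cl \<tau>} (\<lambda>s. G s (apply_bcontfun f s)))"
      by (rule continuous_on_compose2[OF c1 c2]) (use cl in auto)
    hence cont: "continuous_on UNIV (T f)" unfolding T_def by (intro continuous_intros)
    have "norm (T f \<tau>) \<le> \<bar>\<xi>\<bar> + M * h" for \<tau>
    proof -
      have "norm (integral {0..cl \<tau>} (\<lambda>s. G s (apply_bcontfun f s))) \<le> M * (cl \<tau> - 0)"
        by (rule integral_bound) (use cl[of \<tau>] bnd in \<open>auto intro: continuous_on_subset[OF cF]\<close>)
      also have "\<dots> \<le> M * h" using cl[of \<tau>] M0 by (auto intro: mult_left_mono)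
      finally show ?thesis unfolding T_def by simp
    qed
    hence "bounded (range (T f))" by (intro boundedI) auto
    with cont show ?thesis by (simp add: bcontfun_def)
  qed
  define \<Phi> where "\<Phi> f = Bcontfun (T f)" for f
  have app: "apply_bcontfun (\<Phi> f) = T f" for f unfolding \<Phi>_def using Tin Bcontfun_inverse by blast
  have contr: "dist (\<Phi> f) (\<Phi> g) \<le> (1/2) * dist f g" for f g
  proof (rule dist_bound)
    fix \<tau>
    have cF: "continuous_on UNIV (\<lambda>s. G s (apply_bcontfun f s))" "continuous_on UNIV (\<lambda>s. G s (apply_bcontfun g s))"
      by (rule contF, simp)+
    have "dist (T f \<tau>) (T g \<tau>) = norm (integral {0..cl \<tau>} (\<lambda>s. G s (apply_bcontfun f s) - G s (apply_bcontfun g s)))"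
      unfolding T_def dist_real_def
      by (subst integral_diff) (auto intro!: integrable_continuous_real continuous_on_subset[OF cF(1)] continuous_on_subset[OF cF(2)])
    also have "\<dots> \<le> (L * dist f g) * (cl \<tau> - 0)"
    proof (rule integral_bound)
      show "0 \<le> cl \<tau>" using cl[of \<tau>] by simp
      show "continuous_on {0..cl \<tau>} (\<lambda>s. G s (apply_bcontfun f s) - G s (apply_bcontfun g s))"
        by (intro continuous_intros continuous_on_subset[OF cF(1)] continuous_on_subset[OF cF(2)]) auto
      fix t
      have "\<bar>G t (apply_bcontfun f t) - G t (apply_bcontfun g t)\<bar> \<le> L * \<bar>apply_bcontfun f t - apply_bcontfun g t\<bar>" by (rule lip)
      also have "\<dots> \<le> L * dist f g" using dist_bounded[of f t g] L by (auto simp: dist_real_def intro: mult_left_mono)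
      finally show "norm (G t (apply_bcontfun f t) - G t (apply_bcontfun g t)) \<le> L * dist f g" by simp
    qed
    also have "\<dots> \<le> (L * dist f g) * h" using cl[of \<tau>] L by (auto intro!: mult_left_mono)
    also have "\<dots> = (h * L) * dist f g" by simp
    also have "\<dots> \<le> (1/2) * dist f g" by (rule mult_right_mono[OF h(2)]) simp
    finally show "dist (apply_bcontfun (\<Phi> f) \<tau>) (apply_bcontfun (\<Phi> g) \<tau>) \<le> (1/2) * dist f g"
      by (simp add: app)
  qed
  obtain f where f: "\<Phi> f = f" using banach_fix_type[of "1/2" \<Phi>] contr by auto
  have "apply_bcontfun f \<tau> = \<xi> + integral {0..\<tau>} (\<lambda>s. G s (apply_bcontfun f s))" if "\<tau> \<in> {0..h}" for \<tau>
  proof -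
    have "apply_bcontfun f \<tau> = T f \<tau>" by (metis app f)
    moreover have "cl \<tau> = \<tau>" using that by (auto simp: cl_def)
    ultimately show ?thesis by (simp add: T_def)
  qed
  thus ?thesis by (intro exI[of _ "apply_bcontfun f"]) auto
qed

lemma smooth_props:
  assumes sm: "smooth_on S f" and S: "open S" and I: "compact I" "convex I" "I \<subseteq> S"
  shows "\<exists>B C. C \<ge> 0 \<and> continuous_on I f \<and> (\<forall>x\<in>I. \<bar>f x\<bar> \<le> B) \<and>
           (\<forall>x\<in>I. \<forall>y\<in>I. \<bar>f x - f y\<bar> \<le> C * \<bar>x - y\<bar>)"
proof -
  have d0: "f differentiable_on S" using sm unfolding smooth_on_def by (metis funpow_0)
  have d1: "deriv f differentiable_on S" using sm unfolding smooth_on_def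
    by (metis funpow_0 funpow_Suc_right o_apply One_nat_def)
  have cf: "continuous_on I f" using differentiable_imp_continuous_on[OF d0] continuous_on_subset I(3) by blast
  have cd: "continuous_on I (deriv f)" using differentiable_imp_continuous_on[OF d1] continuous_on_subset I(3) by blast
  obtain B where B: "\<forall>x\<in>I. \<bar>f x\<bar> \<le> B"
    using compact_imp_bounded[OF compact_continuous_image[OF cf I(1)]] by (auto simp: bounded_real)
  obtain C where C: "\<forall>x\<in>I. \<bar>deriv f x\<bar> \<le> C"
    using compact_imp_bounded[OF compact_continuous_image[OF cd I(1)]] by (auto simp: bounded_real)
  have der: "(f has_field_derivative deriv f x) (at x within I)" if "x \<in> I" for x
  proof -
    have "f differentiable at x" using d0 S I(3) that by (auto simp: differentiable_on_eq_differentiable_at)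
    hence "DERIV f x :> deriv f x" by (simp add: DERIV_deriv_iff_real_differentiable)
    thus ?thesis by (rule has_field_derivative_at_within)
  qed
  have lip: "\<forall>x\<in>I. \<forall>y\<in>I. \<bar>f x - f y\<bar> \<le> max C 0 * \<bar>x - y\<bar>"
  proof (intro ballI)
    fix x y assume "x \<in> I" "y \<in> I"
    from field_differentiable_bound[OF I(2) der, of "max C 0", OF _ _ this] C
    show "\<bar>f x - f y\<bar> \<le> max C 0 * \<bar>x - y\<bar>" by force
  qed
  show ?thesis using B lip cf by (intro exI[of _ B] exI[of _ "max C 0"]) auto
qed

theorem lemma4:
  fixes \<Lambda> :: "nat \<Rightarrow> real \<Rightarrow> real"
    and p q n N :: nat and E0 \<xi> :: real
  assumes "p > 0" and "q > 0" and "E0 > 0"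
    and smooth: "\<And>k. k \<ge> 1 \<Longrightarrow> smooth_on {0<..<E0} (\<Lambda> k)"
    and vanish: "\<And>k. 1 \<le> k \<Longrightarrow> k < n \<Longrightarrow> (\<forall>E\<in>{0<..<E0}. \<Lambda> k E = 0)"
    and nonzero: "\<exists>E\<in>{0<..<E0}. \<Lambda> n E \<noteq> 0"
    and "q < n" and "n \<le> 2 * p"
    and "2 * p \<le> N" and "N \<le> 4 * p"
    and "\<xi> \<in> {0<..<E0}"
    and "\<Lambda> n \<xi> \<noteq> 0"
    and "deriv (\<Lambda> n) \<xi> < 0"
  shows "\<exists>T v. (\<forall>t>T. v t \<in> {0<..<E0} \<and>
              (v has_real_derivative
                 (\<Sum>k=n..N. t powr (- real k / real q) * \<Lambda> k (v t))) (at t))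
            \<and> (\<lambda>t. v t - \<xi>) \<in> O[at_top](\<lambda>t. t powr (- 1 / real q))"
proof -
  note qn = \<open>q < n\<close> and xi = \<open>\<xi> \<in> {0<..<E0}\<close> and q0 = \<open>q > 0\<close>
  define ks where "ks = {n..N}"
  have kq: "k \<ge> q + 1" if "k \<in> ks" for k using that qn by (auto simp: ks_def)
  define \<delta> where "\<delta> = min (\<xi>/2) ((E0 - \<xi>)/2)"
  have \<delta>0: "\<delta> > 0" using xi by (auto simp: \<delta>_def)
  define I where "I = {\<xi>-\<delta>..\<xi>+\<delta>}"
  have IS: "I \<subseteq> {0<..<E0}"
  proof
    fix x assume "x \<in> I"
    hence "\<xi> - \<delta> \<le> x" "x \<le> \<xi> + \<delta>" by (auto simp: I_def)
    moreover have "\<delta> \<le> \<xi>/2" "\<delta> \<le> (E0 - \<xi>)/2" unfolding \<delta>_def by linarith+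
    ultimately show "x \<in> {0<..<E0}" using xi by auto
  qed
  have "\<forall>k\<in>ks. \<exists>B C. C \<ge> 0 \<and> continuous_on I (\<Lambda> k) \<and> (\<forall>x\<in>I. \<bar>\<Lambda> k x\<bar> \<le> B) \<and>
           (\<forall>x\<in>I. \<forall>y\<in>I. \<bar>\<Lambda> k x - \<Lambda> k y\<bar> \<le> C * \<bar>x - y\<bar>)"
  proof
    fix k assume "k \<in> ks"
    hence "k \<ge> 1" using kq by force
    show "\<exists>B C. C \<ge> 0 \<and> continuous_on I (\<Lambda> k) \<and> (\<forall>x\<in>I. \<bar>\<Lambda> k x\<bar> \<le> B) \<and>
           (\<forall>x\<in>I. \<forall>y\<in>I. \<bar>\<Lambda> k x - \<Lambda> k y\<bar> \<le> C * \<bar>x - y\<bar>)"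
      by (rule smooth_props[OF smooth[OF \<open>k \<ge> 1\<close>]]) (use IS in \<open>auto simp: I_def\<close>)
  qed
  then obtain Mk Lk where MLk: "\<And>k. k \<in> ks \<Longrightarrow> Lk k \<ge> 0 \<and> continuous_on I (\<Lambda> k) \<and> (\<forall>x\<in>I. \<bar>\<Lambda> k x\<bar> \<le> Mk k) \<and>
           (\<forall>x\<in>I. \<forall>y\<in>I. \<bar>\<Lambda> k x - \<Lambda> k y\<bar> \<le> Lk k * \<bar>x - y\<bar>)"
    by metis
  define cu where "cu u = max (\<xi>-\<delta>) (min (\<xi>+\<delta>) u)" for u :: real
  define cs where "cs s = max 0 (min 1 s)" for s :: real
  have cuI: "cu u \<in> I" for u using \<delta>0 by (auto simp: cu_def I_def)
  have cs01: "0 \<le> cs s" "cs s \<le> 1" for s by (auto simp: cs_def)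
  have cu_lip: "\<bar>cu u - cu u'\<bar> \<le> \<bar>u - u'\<bar>" for u u' by (auto simp: cu_def)
  define G where "G s u = - real q * (\<Sum>k\<in>ks. cs s ^ (k-q-1) * \<Lambda> k (cu u))" for s u
  define M where "M = real q * (\<Sum>k\<in>ks. Mk k)"
  define L where "L = real q * (\<Sum>k\<in>ks. Lk k)"
  have L0: "L \<ge> 0" unfolding L_def using MLk by (intro mult_nonneg_nonneg sum_nonneg) auto
  have contG: "continuous_on UNIV (\<lambda>p. G (fst p) (snd p))"
  proof -
    have "continuous_on UNIV (\<lambda>p::real\<times>real. \<Lambda> k (cu (snd p)))" if "k \<in> ks" for k
    proof -
      have c1: "continuous_on I (\<Lambda> k)" using MLk[OF that] by blast
      have c2: "continuous_on UNIV (\<lambda>p::real\<times>real. cu (snd p))" unfolding cu_def by (intro continuous_intros)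
      have "range (\<lambda>p::real\<times>real. cu (snd p)) \<subseteq> I" using cuI by blast
      thus ?thesis by (rule continuous_on_compose2[OF c1 c2])
    qed
    thus ?thesis unfolding G_def cs_def by (intro continuous_intros) auto
  qed
  have bnd: "\<bar>G s u\<bar> \<le> M" for s u
  proof -
    have "\<bar>\<Sum>k\<in>ks. cs s ^ (k-q-1) * \<Lambda> k (cu u)\<bar> \<le> (\<Sum>k\<in>ks. \<bar>cs s ^ (k-q-1) * \<Lambda> k (cu u)\<bar>)"
      by (rule sum_abs)
    also have "\<dots> \<le> (\<Sum>k\<in>ks. Mk k)"
    proof (rule sum_mono)
      fix k assume k: "k \<in> ks"
      have p1: "\<bar>cs s ^ (k-q-1)\<bar> \<le> 1" using cs01[of s] by (simp add: power_le_one)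
      have p2: "\<bar>\<Lambda> k (cu u)\<bar> \<le> Mk k" using MLk[OF k] cuI by blast
      have "\<bar>cs s ^ (k-q-1)\<bar> * \<bar>\<Lambda> k (cu u)\<bar> \<le> 1 * \<bar>\<Lambda> k (cu u)\<bar>"
        by (rule mult_right_mono[OF p1 abs_ge_zero])
      thus "\<bar>cs s ^ (k-q-1) * \<Lambda> k (cu u)\<bar> \<le> Mk k"
        unfolding abs_mult using p2 by linarith
    qed
    finally show ?thesis unfolding G_def M_def abs_mult abs_minus by (simp add: mult_left_mono)
  qed
  have lip: "\<bar>G s u - G s u'\<bar> \<le> L * \<bar>u - u'\<bar>" for s u u'
  proof -
    have "G s u - G s u' = - real q * (\<Sum>k\<in>ks. cs s ^ (k-q-1) * (\<Lambda> k (cu u) - \<Lambda> k (cu u')))"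
      unfolding G_def by (simp add: algebra_simps sum_subtractf)
    hence "\<bar>G s u - G s u'\<bar> = real q * \<bar>\<Sum>k\<in>ks. cs s ^ (k-q-1) * (\<Lambda> k (cu u) - \<Lambda> k (cu u'))\<bar>"
      by (simp add: abs_mult)
    also have "\<dots> \<le> real q * (\<Sum>k\<in>ks. Lk k * \<bar>u - u'\<bar>)"
    proof (rule mult_left_mono[OF order_trans[OF sum_abs sum_mono]])
      fix k assume k: "k \<in> ks"
      have p1: "\<bar>cs s ^ (k-q-1)\<bar> \<le> 1" using cs01[of s] by (simp add: power_le_one)
      have "\<bar>\<Lambda> k (cu u) - \<Lambda> k (cu u')\<bar> \<le> Lk k * \<bar>cu u - cu u'\<bar>" using MLk[OF k] cuI by blast
      also have "\<dots> \<le> Lk k * \<bar>u - u'\<bar>" using MLk[OF k] cu_lip by (auto intro: mult_left_mono)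
      finally have p2: "\<bar>\<Lambda> k (cu u) - \<Lambda> k (cu u')\<bar> \<le> Lk k * \<bar>u - u'\<bar>" .
      show "\<bar>cs s ^ (k-q-1) * (\<Lambda> k (cu u) - \<Lambda> k (cu u'))\<bar> \<le> Lk k * \<bar>u - u'\<bar>"
      proof -
        have "\<bar>cs s ^ (k-q-1)\<bar> * \<bar>\<Lambda> k (cu u) - \<Lambda> k (cu u')\<bar> \<le> 1 * \<bar>\<Lambda> k (cu u) - \<Lambda> k (cu u')\<bar>"
          by (rule mult_right_mono[OF p1 abs_ge_zero])
        thus ?thesis unfolding abs_mult using p2 by linarith
      qed
    qed simp
    also have "\<dots> = L * \<bar>u - u'\<bar>" unfolding L_def by (simp add: sum_distrib_right)
    finally show ?thesis .
  qed
  have M0: "M \<ge> 0" using bnd[of 0 0] by simp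
  define h where "h = min (1/2) (min (\<delta>/(M+1)) (1/(2*(L+1))))"
  have h0: "h > 0" using \<delta>0 M0 L0 by (auto simp: h_def)
  have h1: "h \<le> 1/2" unfolding h_def by (rule min.cobounded1)
  have hL: "h * L \<le> 1/2"
  proof -
    have "h \<le> 1/(2*(L+1))" by (simp add: h_def)
    hence "h * L \<le> 1/(2*(L+1)) * L" using L0 by (rule mult_right_mono)
    also have "\<dots> \<le> 1/2" using L0 by (simp add: field_simps)
    finally show ?thesis .
  qed
  have hM: "M * h < \<delta>"
  proof -
    have "h \<le> \<delta>/(M+1)" by (simp add: h_def)
    hence "M * h \<le> M * (\<delta>/(M+1))" using M0 by (rule mult_left_mono)
    also have "\<dots> < \<delta>" using M0 \<delta>0 by (simp add: field_simps)
    finally show ?thesis .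
  qed
  obtain \<phi> where cphi: "continuous_on UNIV \<phi>"
    and phi: "\<And>\<tau>. \<tau>\<in>{0..h} \<Longrightarrow> \<phi> \<tau> = \<xi> + integral {0..\<tau>} (\<lambda>s. G s (\<phi> s))"
    using picard[OF contG bnd lip h0 hL L0, of \<xi>] by blast
  define F where "F s = G s (\<phi> s)" for s
  have Feq: "(\<lambda>s. G s (\<phi> s)) = F" by (simp add: F_def fun_eq_iff)
  have cF: "continuous_on UNIV F"
  proof -
    have "continuous_on UNIV (\<lambda>s. (s, \<phi> s))" using cphi by (intro continuous_intros) auto
    from continuous_on_compose2[OF contG this] show ?thesis by (simp add: F_def)
  qed
  have close: "\<bar>\<phi> \<tau> - \<xi>\<bar> \<le> M * \<tau>" if "\<tau> \<in> {0..h}" for \<tau>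
  proof -
    have "norm (integral {0..\<tau>} F) \<le> M * (\<tau> - 0)"
    proof (rule integral_bound)
      show "continuous_on {0..\<tau>} F" by (rule continuous_on_subset[OF cF]) auto
      show "\<And>t. t \<in> {0..\<tau>} \<Longrightarrow> norm (F t) \<le> M" using bnd by (simp add: F_def)
    qed (use that in auto)
    moreover have "(\<lambda>s. G s (\<phi> s)) = F" by (simp add: F_def fun_eq_iff)
    ultimately show ?thesis using phi[OF that] by simp
  qed
  have closeI: "\<bar>\<phi> \<tau> - \<xi>\<bar> < \<delta>" if "\<tau> \<in> {0..h}" for \<tau>
  proof -
    have "M * \<tau> \<le> M * h" using that M0 by (auto intro: mult_left_mono)
    thus ?thesis using close[OF that] hM by linarith
  qed
  have derphi: "(\<phi> has_real_derivative F \<tau>) (at \<tau>)" if "\<tau> \<in> {0<..<h}" for \<tau>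
  proof -
    have "((\<lambda>x. integral {0..x} F) has_real_derivative F \<tau>) (at \<tau> within {0..h})"
      by (rule integral_has_real_derivative) (use that in \<open>auto intro: continuous_on_subset[OF cF]\<close>)
    hence "((\<lambda>x. integral {0..x} F) has_real_derivative F \<tau>) (at \<tau>)"
      using that by (simp add: at_within_Icc_at)
    hence "((\<lambda>x. \<xi> + integral {0..x} F) has_real_derivative F \<tau>) (at \<tau>)"
      by (auto intro: derivative_eq_intros)
    thus ?thesis
      by (rule has_field_derivative_transform_within_open[of _ _ _ "{0<..<h}"])
         (use that phi in \<open>auto simp: Feq\<close>)
  qed
  define T where "T = h powr (- real q)"
  define v where "v t = \<phi> (t powr (-1 / real q))" for t
  have tau: "t powr (-1 / real q) \<in> {0<..<h}" if "t > T" for t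
  proof -
    have T0: "T > 0" using h0 by (simp add: T_def)
    have "t powr (-1 / real q) < T powr (-1 / real q)"
      by (rule powr_less_mono2_neg) (use q0 T0 that in auto)
    also have "T powr (-1 / real q) = h"
      using q0 h0 by (simp add: T_def powr_powr)
    finally show ?thesis using T0 that by auto
  qed
  have main: "v t \<in> {0<..<E0} \<and>
              (v has_real_derivative (\<Sum>k=n..N. t powr (- real k / real q) * \<Lambda> k (v t))) (at t)"
    if "t > T" for t
  proof
    have T0: "T > 0" using h0 by (simp add: T_def)
    have t0: "t > 0" using that T0 by simp
    define \<tau> where "\<tau> = t powr (-1 / real q)"
    have ta: "\<tau> \<in> {0<..<h}" using tau[OF that] by (simp add: \<tau>_def)
    have cl: "\<bar>v t - \<xi>\<bar> < \<delta>" using closeI[of \<tau>] ta by (simp add: v_def \<tau>_def)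
    hence vI: "v t \<in> I" by (auto simp: I_def)
    thus "v t \<in> {0<..<E0}" using IS by blast
    have vt: "\<phi> \<tau> = v t" by (simp add: v_def \<tau>_def)
    have cuv: "cu (v t) = v t" using vI by (auto simp: cu_def I_def)
    have cst: "cs \<tau> = \<tau>" using ta h1 by (auto simp: cs_def)
    have d1: "((\<lambda>t. t powr (-1 / real q)) has_real_derivative (-1 / real q) * t powr (-1 / real q - 1)) (at t)"
      by (rule has_real_derivative_powr[OF t0])
    have "(v has_real_derivative F \<tau> * ((-1 / real q) * t powr (-1 / real q - 1))) (at t)"
      unfolding v_def using DERIV_chain[OF derphi[OF ta, unfolded \<tau>_def] d1]
      by (simp add: o_def \<tau>_def)
    moreover have "F \<tau> * ((-1 / real q) * t powr (-1 / real q - 1)) =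
        (\<Sum>k=n..N. t powr (- real k / real q) * \<Lambda> k (v t))"
    proof -
      have "F \<tau> * ((-1 / real q) * t powr (-1 / real q - 1)) =
            (\<Sum>k\<in>ks. (\<tau> ^ (k-q-1) * t powr (-1 / real q - 1)) * \<Lambda> k (v t))"
        unfolding F_def G_def cst using q0
        by (simp add: vt cuv sum_distrib_right sum_distrib_left algebra_simps)
      also have "\<dots> = (\<Sum>k\<in>ks. t powr (- real k / real q) * \<Lambda> k (v t))"
      proof (rule sum.cong[OF refl])
        fix k assume k: "k \<in> ks"
        have e1: "\<tau> ^ (k-q-1) = t powr (real (k-q-1) * (-1 / real q))"
          unfolding \<tau>_def using t0 by (simp add: powr_power)
        have "\<tau> ^ (k-q-1) * t powr (-1 / real q - 1) = t powr (real (k-q-1) * (-1 / real q) + (-1 / real q - 1))"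
          unfolding powr_add e1 ..
        also have "real (k-q-1) * (-1 / real q) + (-1 / real q - 1) = - real k / real q"
          using kq[OF k] q0 by (simp add: of_nat_diff field_simps)
        finally show "(\<tau> ^ (k-q-1) * t powr (-1 / real q - 1)) * \<Lambda> k (v t) = t powr (- real k / real q) * \<Lambda> k (v t)"
          by simp
      qed
      finally show ?thesis by (simp add: ks_def)
    qed
    ultimately show "(v has_real_derivative (\<Sum>k=n..N. t powr (- real k / real q) * \<Lambda> k (v t))) (at t)"
      by simp
  qed
  have bigo: "(\<lambda>t. v t - \<xi>) \<in> O[at_top](\<lambda>t. t powr (- 1 / real q))"
  proof (rule bigoI)
    show "\<forall>\<^sub>F t in at_top. norm (v t - \<xi>) \<le> M * norm (t powr (- 1 / real q))"
      using eventually_gt_at_top[of T]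
    proof eventually_elim
      case (elim t)
      have ta: "t powr (-1 / real q) \<in> {0<..<h}" using tau[OF elim] .
      have "\<bar>v t - \<xi>\<bar> \<le> M * t powr (-1 / real q)" using close[of "t powr (-1 / real q)"] ta
        by (simp add: v_def)
      thus ?case by simp
    qed
  qed
  show ?thesis using main bigo by blast
qed

end
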